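(* Let $k\geq0$ and $S=sgp^+\langle a,b\mid a^kb=ba\rangle$. Then $S$ is prefix-automatic if and only if $k\leq1$.
   Context: $sgp^+\langle A\mid R\rangle$ is the free semigroup $A^+$ of nonempty words modulo the congruence generated by $R$; $a^0$ is the empty word. Automaticity: regular = accepted by a finite automaton. With $\$\notin A$, $A(2,\$)=(A\cup\{\$\})^2\setminus\{(\$,\$)\}$; $(\alpha,\beta)\delta_A^R$ is the word over $A(2,\$)$ obtained by padding the shorter word on the right with $\$$'s and reading letter pairs. For a semigroup $S$ generated by finite $A$, $\phi:A^+\to S$ canonical, $L\subseteq A^+$ regular with $\phi(L)=S$, write $\alpha=\beta$ if $\phi(\alpha)=\phi(\beta)$ and $L_a^\$=\{(\alpha,\beta)\delta^R_A:\alpha,\beta\in L,\alpha a=\beta\}$ for $a\in A\cup\{\varepsilon\}$. $S$ is automatic if some such $(A,L)$ has all $L_a^\$$ regular; prefix-automatic if some such automatic structure also has $\{(\alpha,\beta)\delta_A^R:\alpha\in L,\beta\in\mathrm{Pref}(L),\alpha=\beta\}$ regular ($\mathrm{Pref}(L)$ = prefixes of words of $L$). *)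

theory Defs
  imports Main
begin

definition regular_on :: "'x set \<Rightarrow> 'x list set \<Rightarrow> bool" where
  "regular_on \<Sigma> L \<longleftrightarrow> finite \<Sigma> \<and> L \<subseteq> lists \<Sigma> \<and>
     (\<exists>(Q::nat set) q0 (\<delta>::nat \<Rightarrow> 'x \<Rightarrow> nat) F.
        finite Q \<and> q0 \<in> Q \<and> (\<forall>q\<in>Q. \<forall>x\<in>\<Sigma>. \<delta> q x \<in> Q) \<and> F \<subseteq> Q \<and>
        L = {w \<in> lists \<Sigma>. foldl \<delta> q0 w \<in> F})"

definition sg_eval :: "('s \<Rightarrow> 's \<Rightarrow> 's) \<Rightarrow> 's list \<Rightarrow> 's" where
  "sg_eval m w = foldl m (hd w) (tl w)"

text \<open>Padding: None plays the role of the padding symbol dollar.\<close>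
definition pad :: "'a list \<Rightarrow> 'a list \<Rightarrow> ('a option \<times> 'a option) list" where
  "pad u v = (let n = max (length u) (length v) in
     zip (map Some u @ replicate (n - length u) None)
         (map Some v @ replicate (n - length v) None))"

definition alphabet2 :: "'a set \<Rightarrow> ('a option \<times> 'a option) set" where
  "alphabet2 A = (insert None (Some ` A)) \<times> (insert None (Some ` A)) - {(None, None)}"

text \<open>L_a^dollar, where the letter a is given as a word of length 0 (epsilon) or 1.\<close>
definition L_dollar :: "('s \<Rightarrow> 's \<Rightarrow> 's) \<Rightarrow> 's list set \<Rightarrow> 's list \<Rightarrow> ('s option \<times> 's option) list set" where
  "L_dollar m L a = {pad \<alpha> \<beta> | \<alpha> \<beta>. \<alpha> \<in> L \<and> \<beta> \<in> L \<and> sg_eval m (\<alpha> @ a) = sg_eval m \<beta>}"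

definition Pref :: "'a list set \<Rightarrow> 'a list set" where
  "Pref L = {\<beta>. \<exists>\<gamma>. \<beta> @ \<gamma> \<in> L}"

definition automatic_structure :: "'s set \<Rightarrow> ('s \<Rightarrow> 's \<Rightarrow> 's) \<Rightarrow> 's set \<Rightarrow> 's list set \<Rightarrow> bool" where
  "automatic_structure C m A L \<longleftrightarrow>
     finite A \<and> A \<subseteq> C \<and> regular_on A L \<and> (\<forall>w\<in>L. w \<noteq> []) \<and> sg_eval m ` L = C \<and>
     (\<forall>a \<in> insert [] ((\<lambda>x. [x]) ` A). regular_on (alphabet2 A) (L_dollar m L a))"

definition automatic_sg :: "'s set \<Rightarrow> ('s \<Rightarrow> 's \<Rightarrow> 's) \<Rightarrow> bool" where
  "automatic_sg C m \<longleftrightarrow> (\<exists>A L. automatic_structure C m A L)"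

definition prefix_automatic_sg :: "'s set \<Rightarrow> ('s \<Rightarrow> 's \<Rightarrow> 's) \<Rightarrow> bool" where
  "prefix_automatic_sg C m \<longleftrightarrow> (\<exists>A L. automatic_structure C m A L \<and>
     regular_on (alphabet2 A)
       {pad \<alpha> \<beta> | \<alpha> \<beta>. \<alpha> \<in> L \<and> \<beta> \<in> Pref L \<and> \<beta> \<noteq> [] \<and> sg_eval m \<alpha> = sg_eval m \<beta>})"

datatype ab = La | Lb

definition rstep :: "nat \<Rightarrow> (ab list \<times> ab list) set" where
  "rstep k = {(u @ replicate k La @ [Lb] @ v, u @ [Lb, La] @ v) | u v. True}"

definition cong_k :: "nat \<Rightarrow> (ab list \<times> ab list) set" where
  "cong_k k = (rstep k \<union> (rstep k)\<inverse>)\<^sup>*"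

definition S_carrier :: "nat \<Rightarrow> ab list set set" where
  "S_carrier k = {w. w \<noteq> []} // cong_k k"

definition S_mult :: "nat \<Rightarrow> ab list set \<Rightarrow> ab list set \<Rightarrow> ab list set" where
  "S_mult k X Y = cong_k k `` {x @ y | x y. x \<in> X \<and> y \<in> Y}"

end

theory Submission
  imports Defs
begin


fun fk :: "nat \<Rightarrow> ab list \<Rightarrow> nat \<times> nat" where
  "fk k [] = (0,0)"
| "fk k (La # w) = (fst (fk k w) + 1, snd (fk k w))"
| "fk k (Lb # w) = (k * fst (fk k w), Suc (snd (fk k w)))"

lemma fk_append: "fk k (u @ v) = (fst (fk k u) + k ^ snd (fk k u) * fst (fk k v), snd (fk k u) + snd (fk k v))"
  by (induction k u rule: fk.induct) (auto simp: algebra_simps)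

lemma fk_repA: "fk k (replicate n La @ w) = (fst (fk k w) + n, snd (fk k w))"
  by (induction n) auto

lemma fk_repA0[simp]: "fk k (replicate n La) = (n, 0)"
  by (induction n) auto

lemma fk_rstep: "(x, y) \<in> rstep k \<Longrightarrow> fk k x = fk k y"
  unfolding rstep_def by (auto simp: fk_append fk_repA algebra_simps)

lemma cong_fk: "(x,y) \<in> cong_k k \<Longrightarrow> fk k x = fk k y"
  unfolding cong_k_def
  by (induction rule: rtrancl_induct) (auto dest: fk_rstep)

lemma rstep_ctx: "(x,y) \<in> rstep k \<Longrightarrow> (p @ x @ s, p @ y @ s) \<in> rstep k"
proof -
  assume "(x,y) \<in> rstep k"
  then obtain u v where "x = u @ replicate k La @ [Lb] @ v" "y = u @ [Lb, La] @ v"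
    unfolding rstep_def by blast
  then have "p@x@s = (p@u) @ replicate k La @ [Lb] @ (v@s)" "p@y@s = (p@u) @ [Lb, La] @ (v@s)"
    by simp_all
  then show ?thesis unfolding rstep_def by blast
qed

lemma cong_ctx: "(x,y) \<in> cong_k k \<Longrightarrow> (p @ x @ s, p @ y @ s) \<in> cong_k k"
  unfolding cong_k_def
proof (induction rule: rtrancl_induct)
  case base then show ?case by simp
next
  case (step y z)
  then have "(p@y@s, p@z@s) \<in> rstep k \<union> (rstep k)\<inverse>" using rstep_ctx by blast
  with step.IH show ?case by (rule rtrancl_into_rtrancl)
qed

lemma equiv_cong: "equiv UNIV (cong_k k)"
  unfolding cong_k_def equiv_def
  by (auto simp: refl_rtrancl sym_rtrancl sym_Un_converse trans_rtrancl)

lemma cong_refl: "(x,x) \<in> cong_k k" unfolding cong_k_def by simp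
lemma cong_sym: "(x,y) \<in> cong_k k \<Longrightarrow> (y,x) \<in> cong_k k"
  using equiv_cong[of k] unfolding equiv_def by (auto dest: symD)
lemma cong_trans: "(x,y) \<in> cong_k k \<Longrightarrow> (y,z) \<in> cong_k k \<Longrightarrow> (x,z) \<in> cong_k k"
  using equiv_cong[of k] unfolding equiv_def by (auto dest: transD)

definition nf :: "nat \<times> nat \<Rightarrow> ab list" where
  "nf p = replicate (fst p) La @ replicate (snd p) Lb"

lemma b_as: "(Lb # replicate i La, replicate (k*i) La @ [Lb]) \<in> cong_k k"
proof (induction i)
  case 0 then show ?case by (simp add: cong_refl)
next
  case (Suc i)
  have "(replicate k La @ [Lb] @ replicate i La, [] @ [Lb, La] @ replicate i La) \<in> rstep k"
    unfolding rstep_def by blast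
  then have 1: "(Lb # replicate (Suc i) La, replicate k La @ Lb # replicate i La) \<in> cong_k k"
    unfolding cong_k_def by auto
  have 2: "(replicate k La @ (Lb # replicate i La) @ [], replicate k La @ (replicate (k*i) La @ [Lb]) @ []) \<in> cong_k k"
    by (rule cong_ctx[OF Suc.IH])
  have "replicate k La @ replicate (k*i) La @ [Lb] = replicate (k * Suc i) La @ [Lb]"
    by (simp add: replicate_add[symmetric])
  with 1 2 show ?case by (auto intro: cong_trans)
qed

lemma nf_cong: "(w, nf (fk k w)) \<in> cong_k k"
proof (induction w)
  case Nil then show ?case by (simp add: nf_def cong_refl)
next
  case (Cons c w)
  have ctx: "(c # w, c # nf (fk k w)) \<in> cong_k k"
    using cong_ctx[OF Cons.IH, of "[c]" "[]"] by simp
  show ?case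
  proof (cases c)
    case La then show ?thesis using ctx by (simp add: nf_def)
  next
    case Lb
    have "(Lb # replicate (fst (fk k w)) La @ replicate (snd (fk k w)) Lb,
           replicate (k * fst (fk k w)) La @ [Lb] @ replicate (snd (fk k w)) Lb) \<in> cong_k k"
      using cong_ctx[OF b_as[of "fst (fk k w)" k], where p="[]" and s="replicate (snd (fk k w)) Lb"] by simp
    then have "(Lb # nf (fk k w), nf (fk k (Lb # w))) \<in> cong_k k" by (simp add: nf_def)
    then show ?thesis using ctx Lb by (auto intro: cong_trans)
  qed
qed

abbreviation cls :: "nat \<Rightarrow> ab list \<Rightarrow> ab list set" where
  "cls k w \<equiv> cong_k k `` {w}"

lemma cls_eq: "cls k u = cls k v \<longleftrightarrow> fk k u = fk k v"
proof
  assume "cls k u = cls k v"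
  then have "(u,v) \<in> cong_k k" using eq_equiv_class_iff[OF equiv_cong] by blast
  then show "fk k u = fk k v" by (rule cong_fk)
next
  assume "fk k u = fk k v"
  then have "(u,v) \<in> cong_k k" using nf_cong[of u k] nf_cong[of v k]
    by (metis cong_sym cong_trans)
  then show "cls k u = cls k v" by (rule equiv_class_eq[OF equiv_cong])
qed

lemma S_mult_cls: "S_mult k (cls k u) (cls k v) = cls k (u @ v)"
proof
  show "S_mult k (cls k u) (cls k v) \<subseteq> cls k (u @ v)"
  proof
    fix z assume "z \<in> S_mult k (cls k u) (cls k v)"
    then obtain x y where xy: "(u,x) \<in> cong_k k" "(v,y) \<in> cong_k k" "(x@y, z) \<in> cong_k k"
      unfolding S_mult_def by auto
    have "(u@v, x@v) \<in> cong_k k" using cong_ctx[OF xy(1), of "[]" v] by simp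
    moreover have "(x@v, x@y) \<in> cong_k k" using cong_ctx[OF xy(2), of x "[]"] by simp
    ultimately show "z \<in> cls k (u@v)" using xy(3) by (auto intro: cong_trans)
  qed
next
  show "cls k (u @ v) \<subseteq> S_mult k (cls k u) (cls k v)"
    unfolding S_mult_def by (auto intro: cong_refl)
qed

lemma eval_cls:
  "w \<noteq> [] \<Longrightarrow> (\<forall>g\<in>set w. g = cls k (r g)) \<Longrightarrow> sg_eval (S_mult k) w = cls k (concat (map r w))"
proof (induction w rule: rev_induct)
  case Nil then show ?case by simp
next
  case (snoc g w)
  show ?case
  proof (cases "w = []")
    case True then show ?thesis using snoc.prems by (simp add: sg_eval_def)
  next
    case False
    then have "sg_eval (S_mult k) (w @ [g]) = S_mult k (sg_eval (S_mult k) w) g"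
      by (cases w) (auto simp: sg_eval_def)
    also have "\<dots> = S_mult k (cls k (concat (map r w))) (cls k (r g))"
      using snoc False by simp
    finally show ?thesis by (simp add: S_mult_cls)
  qed
qed

lemma carrier_iff: "X \<in> S_carrier k \<longleftrightarrow> (\<exists>w. w \<noteq> [] \<and> X = cls k w)"
  unfolding S_carrier_def quotient_def by auto



lemma pad_Cons: "pad (a#u) (b#v) = (Some a, Some b) # pad u v"
  by (simp add: pad_def Let_def)

lemma pad_Nil1: "pad [] v = map (\<lambda>c. (None, Some c)) v"
  by (simp add: pad_def Let_def zip_replicate1)

lemma pad_Nil2: "pad u [] = map (\<lambda>c. (Some c, None)) u"
  by (simp add: pad_def Let_def zip_replicate2)

lemma pad_Nil_Nil[simp]: "pad [] [] = []" by (simp add: pad_Nil1)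

lemma pad_append_right:
  "length u = length v1 \<Longrightarrow> pad u (v1 @ v2) = pad u v1 @ map (\<lambda>c. (None, Some c)) v2"
proof (induction u arbitrary: v1)
  case Nil then show ?case by (simp add: pad_Nil1)
next
  case (Cons a u) then show ?case by (cases v1) (auto simp: pad_Cons)
qed

lemma pad_append_left:
  "length u1 = length v \<Longrightarrow> pad (u1 @ u2) v = pad u1 v @ map (\<lambda>c. (Some c, None)) u2"
proof (induction u1 arbitrary: v)
  case Nil then show ?case by (simp add: pad_Nil2)
next
  case (Cons a u) then show ?case by (cases v) (auto simp: pad_Cons)
qed

lemma tw_fst: "takeWhile (\<lambda>x. x \<noteq> None) (map fst (pad u v)) = map Some u"
proof (induction u arbitrary: v)
  case Nil then show ?case by (cases v) (simp_all add: pad_Nil1)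
next
  case (Cons a u) then show ?case
    by (cases v) (auto simp: pad_Cons pad_Nil2 takeWhile_eq_all_conv comp_def)
qed

lemma tw_snd: "takeWhile (\<lambda>x. x \<noteq> None) (map snd (pad u v)) = map Some v"
proof (induction v arbitrary: u)
  case Nil then show ?case by (cases u) (simp_all add: pad_Nil2)
next
  case (Cons a v) then show ?case
    by (cases u) (auto simp: pad_Cons pad_Nil1 takeWhile_eq_all_conv comp_def)
qed

lemma pad_inj: "pad u v = pad u' v' \<Longrightarrow> u = u' \<and> v = v'"
proof -
  assume h: "pad u v = pad u' v'"
  have "map Some u = map Some u'" using tw_fst[of u v] tw_fst[of u' v'] h by simp
  moreover have "map Some v = map Some v'" using tw_snd[of u v] tw_snd[of u' v'] h by simp
  ultimately show ?thesis by (simp add: inj_map_eq_map)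
qed

lemma pad_lists: "set u \<subseteq> A \<Longrightarrow> set v \<subseteq> A \<Longrightarrow> pad u v \<in> lists (alphabet2 A)"
proof (induction u arbitrary: v)
  case Nil then show ?case by (force simp: pad_Nil1 alphabet2_def)
next
  case (Cons a u) then show ?case
    by (cases v) (force simp: pad_Cons pad_Nil2 alphabet2_def)+
qed

lemma pad_length: "length (pad u v) = max (length u) (length v)"
  by (simp add: pad_def Let_def)



lemma regular_via_desc:
  fixes \<delta> :: "nat \<Rightarrow> 'x \<Rightarrow> nat" and D :: "nat \<Rightarrow> 'x list set"
  assumes fin: "finite \<Sigma>" and sub: "L \<subseteq> lists \<Sigma>"
    and rng: "\<And>q x. \<delta> q x \<le> n" and q0: "q0 \<le> n" and F: "F \<subseteq> {..n}"
    and C1: "\<And>q. [] \<in> D q \<longleftrightarrow> q \<in> F"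
    and C2: "\<And>q c w. c # w \<in> D q \<longleftrightarrow> w \<in> D (\<delta> q c)"
    and L: "L = D q0"
  shows "regular_on \<Sigma> L"
proof -
  have key: "foldl \<delta> q w \<in> F \<longleftrightarrow> w \<in> D q" for q w
    by (induction w arbitrary: q) (simp_all add: C1 C2)
  have LL: "L = {w \<in> lists \<Sigma>. foldl \<delta> q0 w \<in> F}" using sub key L by auto
  show ?thesis unfolding regular_on_def
  proof (intro conjI fin sub)
    show "\<exists>(Q::nat set) q0 \<delta> F. finite Q \<and> q0 \<in> Q \<and> (\<forall>q\<in>Q. \<forall>x\<in>\<Sigma>. \<delta> q x \<in> Q) \<and> F \<subseteq> Q \<and>
        L = {w \<in> lists \<Sigma>. foldl \<delta> q0 w \<in> F}"
      by (rule exI[of _ "{..n}"], rule exI[of _ q0], rule exI[of _ \<delta>], rule exI[of _ F])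
         (use LL q0 F rng in auto)
  qed
qed

lemma foldl_in: "q \<in> Q \<Longrightarrow> \<forall>q\<in>Q. \<forall>x\<in>\<Sigma>. \<delta> q x \<in> Q \<Longrightarrow> w \<in> lists \<Sigma> \<Longrightarrow> foldl \<delta> q w \<in> Q"
  by (induction w arbitrary: q) auto

lemma foldl_pow: "foldl \<delta> q v = q \<Longrightarrow> foldl \<delta> q (concat (replicate n v)) = q"
  by (induction n) auto

lemma pump:
  assumes "regular_on \<Sigma> R"
  shows "\<exists>N. \<forall>w1 w2. w1 @ w2 \<in> R \<longrightarrow> length w2 > N \<longrightarrow>
           (\<forall>M. \<exists>w2'. w1 @ w2' \<in> R \<and> length w2' > M \<and> set w2' \<subseteq> set w2)"
proof -
  obtain Q :: "nat set" and q0 :: nat and \<delta> :: "nat \<Rightarrow> 'a \<Rightarrow> nat" and F where fQ: "finite Q" and q0: "q0 \<in> Q" and cl: "\<forall>q\<in>Q. \<forall>x\<in>\<Sigma>. \<delta> q x \<in> Q"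
    and FQ: "F \<subseteq> Q" and R: "R = {w \<in> lists \<Sigma>. foldl \<delta> q0 w \<in> F}"
    using assms unfolding regular_on_def by blast
  show ?thesis
  proof (intro exI[of _ "card Q"] allI impI)
    fix w1 w2 M assume w: "w1 @ w2 \<in> R" and len: "length w2 > card Q"
    define s where "s i = foldl \<delta> q0 (w1 @ take i w2)" for i
    have wl: "w1 @ w2 \<in> lists \<Sigma>" using w R by auto
    have sQ: "s ` {0..length w2} \<subseteq> Q"
    proof
      fix x assume "x \<in> s ` {0..length w2}"
      then obtain i where x: "x = s i" by auto
      have "set (take i w2) \<subseteq> set w2" by (rule set_take_subset)
      then have "w1 @ take i w2 \<in> lists \<Sigma>" using wl by auto
      then show "x \<in> Q" unfolding x s_def using foldl_in[OF q0 cl] by blast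
    qed
    have "\<not> inj_on s {0..length w2}"
    proof
      assume "inj_on s {0..length w2}"
      then have "card (s ` {0..length w2}) = Suc (length w2)" by (simp add: card_image)
      moreover have "card (s ` {0..length w2}) \<le> card Q" using sQ fQ card_mono by blast
      ultimately show False using len by simp
    qed
    then obtain x y where xy: "x \<le> length w2" "y \<le> length w2" "x \<noteq> y" "s x = s y"
      unfolding inj_on_def by auto
    define i where "i = min x y"
    define j where "j = max x y"
    have ij: "i \<le> length w2" "j \<le> length w2" "i < j" "s i = s j"
      using xy unfolding i_def j_def by (auto simp: min_def max_def)
    define u where "u = take i w2"
    define v where "v = drop i (take j w2)"
    define z where "z = drop j w2"
    have tt: "take i (take j w2) = take i w2" using ij by (simp add: min_def)
    have uv: "u @ v = take j w2" unfolding u_def v_def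
      using append_take_drop_id[of i "take j w2"] tt by simp
    have "w2 = (u @ v) @ z" unfolding z_def uv by simp
    then have w2eq: "w2 = u @ v @ z" by simp
    have vne: "v \<noteq> []" using ij unfolding v_def by simp
    have "s j = foldl \<delta> (s i) v" unfolding s_def using uv[symmetric] unfolding u_def by simp
    then have loop: "foldl \<delta> (s i) v = s i" using ij(4) by simp
    define w2' where "w2' = u @ concat (replicate (Suc M) v) @ z"
    have "foldl \<delta> q0 (w1 @ w2') = foldl \<delta> (s i) z"
      unfolding w2'_def s_def u_def
      using foldl_pow[OF loop[unfolded s_def u_def], of "Suc M"] by simp
    also have "\<dots> = foldl \<delta> q0 (w1 @ w2)"
      using loop unfolding s_def u_def by (subst w2eq) (simp add: u_def)
    finally have fe: "foldl \<delta> q0 (w1 @ w2') = foldl \<delta> q0 (w1 @ w2)" .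
    have ss: "set w2' \<subseteq> set w2" unfolding w2'_def using w2eq by auto
    have "length w2' \<ge> Suc M * length v" unfolding w2'_def by (simp add: length_concat sum_list_replicate)
    moreover have "Suc M * length v \<ge> Suc M" using vne by (cases v) auto
    ultimately have "length w2' > M" by simp
    moreover have "w1 @ w2' \<in> R" using wl ss fe w R by auto
    ultimately show "\<exists>w2'. w1 @ w2' \<in> R \<and> length w2' > M \<and> set w2' \<subseteq> set w2"
      using ss by blast
  qed
qed

lemma bound_right:
  assumes reg: "regular_on \<Sigma> (L_dollar m L a)"
    and hR: "\<And>\<beta>. \<beta> \<in> L \<Longrightarrow> length \<beta> \<le> h (sg_eval m \<beta>)"
  shows "\<exists>N. \<forall>\<alpha> \<beta>. \<alpha> \<in> L \<longrightarrow> \<beta> \<in> L \<longrightarrow> sg_eval m (\<alpha>@a) = sg_eval m \<beta> \<longrightarrow> length \<beta> \<le> length \<alpha> + N"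
proof -
  obtain N where N: "\<forall>w1 w2. w1 @ w2 \<in> L_dollar m L a \<longrightarrow> length w2 > N \<longrightarrow>
           (\<forall>M. \<exists>w2'. w1 @ w2' \<in> L_dollar m L a \<and> length w2' > M \<and> set w2' \<subseteq> set w2)"
    using pump[OF reg] by blast
  show ?thesis
  proof (intro exI[of _ N] allI impI; rule ccontr)
    fix \<alpha> \<beta> assume a: "\<alpha> \<in> L" "\<beta> \<in> L" "sg_eval m (\<alpha>@a) = sg_eval m \<beta>" and "\<not> length \<beta> \<le> length \<alpha> + N"
    then have lg: "length \<beta> > length \<alpha> + N" by simp
    define gR where "gR = (\<lambda>c::'a. (None :: 'a option, Some c))"
    define \<beta>1 where "\<beta>1 = take (length \<alpha>) \<beta>"
    have l1: "length \<alpha> = length \<beta>1" unfolding \<beta>1_def using lg by simp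
    have "pad \<alpha> \<beta> = pad \<alpha> \<beta>1 @ map gR (drop (length \<alpha>) \<beta>)"
      using pad_append_right[OF l1, of "drop (length \<alpha>) \<beta>"] unfolding \<beta>1_def gR_def by simp
    moreover have "pad \<alpha> \<beta> \<in> L_dollar m L a" unfolding L_dollar_def using a by blast
    ultimately have mem: "pad \<alpha> \<beta>1 @ map gR (drop (length \<alpha>) \<beta>) \<in> L_dollar m L a" by simp
    have len: "length (map gR (drop (length \<alpha>) \<beta>)) > N" using lg by simp
    obtain w2' where w2': "pad \<alpha> \<beta>1 @ w2' \<in> L_dollar m L a"
      "length w2' > h (sg_eval m \<beta>)" "set w2' \<subseteq> set (map gR (drop (length \<alpha>) \<beta>))"
      using N[rule_format, OF mem len] by blast
    define \<beta>2 where "\<beta>2 = map (the \<circ> snd) w2'"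
    have "map gR \<beta>2 = w2'" unfolding \<beta>2_def gR_def using w2'(3)
      by (induction w2') (auto simp: gR_def)
    then have "pad \<alpha> (\<beta>1 @ \<beta>2) \<in> L_dollar m L a"
      using w2'(1) pad_append_right[OF l1, of \<beta>2] unfolding gR_def by simp
    then obtain \<alpha>' \<beta>' where e: "pad \<alpha> (\<beta>1 @ \<beta>2) = pad \<alpha>' \<beta>'" "\<alpha>' \<in> L" "\<beta>' \<in> L"
       "sg_eval m (\<alpha>'@a) = sg_eval m \<beta>'" unfolding L_dollar_def by blast
    then have "\<alpha>' = \<alpha>" "\<beta>' = \<beta>1 @ \<beta>2" using pad_inj by metis+
    then have "length (\<beta>1 @ \<beta>2) \<le> h (sg_eval m \<beta>)" using hR[OF e(3)] e(4) a(3) by simp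
    moreover have "length \<beta>2 = length w2'" unfolding \<beta>2_def by simp
    ultimately show False using w2'(2) by simp
  qed
qed

lemma bound_left:
  assumes reg: "regular_on \<Sigma> (L_dollar m L a)"
    and hL: "\<And>\<alpha>. \<alpha> \<in> L \<Longrightarrow> length \<alpha> \<le> h (sg_eval m (\<alpha> @ a))"
  shows "\<exists>N. \<forall>\<alpha> \<beta>. \<alpha> \<in> L \<longrightarrow> \<beta> \<in> L \<longrightarrow> sg_eval m (\<alpha>@a) = sg_eval m \<beta> \<longrightarrow> length \<alpha> \<le> length \<beta> + N"
proof -
  obtain N where N: "\<forall>w1 w2. w1 @ w2 \<in> L_dollar m L a \<longrightarrow> length w2 > N \<longrightarrow>
           (\<forall>M. \<exists>w2'. w1 @ w2' \<in> L_dollar m L a \<and> length w2' > M \<and> set w2' \<subseteq> set w2)"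
    using pump[OF reg] by blast
  show ?thesis
  proof (intro exI[of _ N] allI impI; rule ccontr)
    fix \<alpha> \<beta> assume a: "\<alpha> \<in> L" "\<beta> \<in> L" "sg_eval m (\<alpha>@a) = sg_eval m \<beta>" and "\<not> length \<alpha> \<le> length \<beta> + N"
    then have lg: "length \<alpha> > length \<beta> + N" by simp
    define gL where "gL = (\<lambda>c::'a. (Some c, None :: 'a option))"
    define \<alpha>1 where "\<alpha>1 = take (length \<beta>) \<alpha>"
    have l1: "length \<alpha>1 = length \<beta>" unfolding \<alpha>1_def using lg by simp
    have "pad \<alpha> \<beta> = pad \<alpha>1 \<beta> @ map gL (drop (length \<beta>) \<alpha>)"
      using pad_append_left[OF l1, of "drop (length \<beta>) \<alpha>"] unfolding \<alpha>1_def gL_def by simp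
    moreover have "pad \<alpha> \<beta> \<in> L_dollar m L a" unfolding L_dollar_def using a by blast
    ultimately have mem: "pad \<alpha>1 \<beta> @ map gL (drop (length \<beta>) \<alpha>) \<in> L_dollar m L a" by simp
    have len: "length (map gL (drop (length \<beta>) \<alpha>)) > N" using lg by simp
    obtain w2' where w2': "pad \<alpha>1 \<beta> @ w2' \<in> L_dollar m L a"
      "length w2' > h (sg_eval m \<beta>)" "set w2' \<subseteq> set (map gL (drop (length \<beta>) \<alpha>))"
      using N[rule_format, OF mem len] by blast
    define \<alpha>2 where "\<alpha>2 = map (the \<circ> fst) w2'"
    have "map gL \<alpha>2 = w2'" unfolding \<alpha>2_def gL_def using w2'(3)
      by (induction w2') (auto simp: gL_def)
    then have "pad (\<alpha>1 @ \<alpha>2) \<beta> \<in> L_dollar m L a"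
      using w2'(1) pad_append_left[OF l1, of \<alpha>2] unfolding gL_def by simp
    then obtain \<alpha>' \<beta>' where e: "pad (\<alpha>1 @ \<alpha>2) \<beta> = pad \<alpha>' \<beta>'" "\<alpha>' \<in> L" "\<beta>' \<in> L"
       "sg_eval m (\<alpha>'@a) = sg_eval m \<beta>'" unfolding L_dollar_def by blast
    then have "\<alpha>' = \<alpha>1 @ \<alpha>2" "\<beta>' = \<beta>" using pad_inj by metis+
    then have "length (\<alpha>1 @ \<alpha>2) \<le> h (sg_eval m \<beta>)" using hL[OF e(2)] e(4) by simp
    moreover have "length \<alpha>2 = length w2'" unfolding \<alpha>2_def by simp
    ultimately show False using w2'(2) by simp
  qed
qed



lemma fk_repB[simp]: "fk k (replicate n Lb) = (0, n)"
  by (induction n) auto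

lemma sq_lt_pow2_aux: "(m + 5) * (m + 5) < (2::nat) ^ (m + 5)"
proof (induction m)
  case 0 then show ?case by simp
next
  case (Suc m)
  define n where "n = m + 5"
  have IH: "n * n < 2 ^ n" using Suc.IH unfolding n_def .
  have h5: "5 \<le> n" unfolding n_def by simp
  have "5 * n \<le> n * n" using mult_le_mono1[OF h5] by simp
  then have h: "2 * n + 1 \<le> n * n" using h5 by linarith
  have "Suc n * Suc n = n * n + 2 * n + 1" by simp
  also have "\<dots> < 2 ^ n + 2 * n + 1" using IH by simp
  also have "\<dots> \<le> 2 ^ n + n * n" using h by simp
  also have "\<dots> \<le> 2 ^ Suc n" using IH by simp
  finally show ?case unfolding n_def by simp
qed

lemma sq_lt_pow2: "5 \<le> n \<Longrightarrow> n * n < (2::nat) ^ n"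
  using sq_lt_pow2_aux[of "n - 5"] by simp

lemma arith_exists:
  assumes "(2::nat) \<le> k"
  shows "\<exists>n\<ge>1. c * (n + N + n * N) < k ^ n"
proof -
  define d where "d = c * (1 + 2 * N)"
  define n where "n = d + 5"
  have "c * (n + N + n * N) \<le> c * ((1 + 2*N) * n)"
    by (rule mult_le_mono2) (simp add: n_def algebra_simps)
  also have "\<dots> = d * n" by (simp add: d_def algebra_simps)
  also have "\<dots> < n * n" by (simp add: n_def)
  also have "\<dots> < 2 ^ n" by (rule sq_lt_pow2) (simp add: n_def)
  also have "\<dots> \<le> k ^ n" using assms by (simp add: power_mono)
  finally show ?thesis by (intro exI[of _ n]) (simp add: n_def)
qed

lemma sg_eval_snoc: "w \<noteq> [] \<Longrightarrow> sg_eval m (w @ [g]) = m (sg_eval m w) g"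
  by (cases w) (auto simp: sg_eval_def)

lemma sg_eval_single[simp]: "sg_eval m [g] = g"
  by (simp add: sg_eval_def)

lemma fk_nonzero: "w \<noteq> [] \<Longrightarrow> 1 \<le> fst (fk k w) + snd (fk k w)"
proof -
  assume "w \<noteq> []"
  then obtain c w' where "w = c # w'" by (cases w) auto
  then show ?thesis by (cases c) auto
qed

lemma fk_size_append: "1 \<le> k \<Longrightarrow>
  fst (fk k u) + snd (fk k u) + (fst (fk k v) + snd (fk k v)) \<le> fst (fk k (u@v)) + snd (fk k (u@v))"
proof -
  assume k: "1 \<le> k"
  have "fst (fk k v) \<le> k ^ snd (fk k u) * fst (fk k v)" using k by simp
  then show ?thesis by (simp add: fk_append)
qed

lemma not_automatic:
  assumes k2: "2 \<le> k" and AS: "automatic_structure (S_carrier k) (S_mult k) A L"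
  shows False
proof -
  let ?C = "S_carrier k" and ?m = "S_mult k"
  have k1: "1 \<le> k" using k2 by simp
  from AS have finA: "finite A" and AC: "A \<subseteq> ?C" and regL: "regular_on A L"
    and ne: "\<forall>w\<in>L. w \<noteq> []" and surj: "sg_eval ?m ` L = ?C"
    and regs: "\<forall>a \<in> insert [] ((\<lambda>x. [x]) ` A). regular_on (alphabet2 A) (L_dollar ?m L a)"
    unfolding automatic_structure_def by auto
  have LA: "L \<subseteq> lists A" using regL unfolding regular_on_def by auto
  define rep where "rep g = (SOME w. w \<noteq> [] \<and> g = cls k w)" for g
  have rep: "rep g \<noteq> [] \<and> g = cls k (rep g)" if "g \<in> ?C" for g
  proof -
    from carrier_iff[THEN iffD1, OF that] obtain w where "w \<noteq> [] \<and> g = cls k w" ..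
    then show ?thesis unfolding rep_def by (rule someI)
  qed
  define W where "W \<gamma> = concat (map rep \<gamma>)" for \<gamma>
  have evW: "sg_eval ?m \<gamma> = cls k (W \<gamma>)" if "\<gamma> \<in> lists A" "\<gamma> \<noteq> []" for \<gamma>
    unfolding W_def using that AC rep by (intro eval_cls) auto
  have Wne: "W \<gamma> \<noteq> []" if "\<gamma> \<in> lists A" "\<gamma> \<noteq> []" for \<gamma>
    using that AC rep unfolding W_def by (cases \<gamma>) auto
  define sz where "sz w = fst (fk k w) + snd (fk k w)" for w
  have lenW: "length \<gamma> \<le> sz (W \<gamma>)" if "\<gamma> \<in> lists A" for \<gamma>
    using that
  proof (induction \<gamma>)
    case Nil then show ?case by simp
  next
    case (Cons g \<gamma>)
    have gA: "g \<in> A" using Cons by auto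
    have "1 \<le> sz (rep g)" using rep[OF subsetD[OF AC gA]] fk_nonzero unfolding sz_def by auto
    moreover have "sz (rep g) + sz (W \<gamma>) \<le> sz (W (g # \<gamma>))"
      unfolding W_def sz_def using fk_size_append[OF k1] by simp
    ultimately show ?case using Cons by simp
  qed
  define h where "h X = sz (SOME w. w \<in> X)" for X
  have h_cls: "h (cls k w) = sz w" for w
  proof -
    have "(SOME w'. w' \<in> cls k w) \<in> cls k w" by (rule someI[of _ w]) (simp add: cong_refl)
    then have "fk k w = fk k (SOME w'. w' \<in> cls k w)" by (simp add: cong_fk)
    then show ?thesis unfolding h_def sz_def by simp
  qed
  have hle: "length \<gamma> \<le> h (sg_eval ?m \<gamma>)" if "\<gamma> \<in> lists A" "\<gamma> \<noteq> []" for \<gamma>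
    using evW[OF that] h_cls lenW[OF that(1)] by simp
  have evfk: "fk k (W \<gamma>) = fk k w" if "\<gamma> \<in> lists A" "\<gamma> \<noteq> []" "sg_eval ?m \<gamma> = cls k w" for \<gamma> w
  proof -
    have "cls k (W \<gamma>) = cls k w" using evW[OF that(1,2)] that(3) by simp
    then show ?thesis using cls_eq by blast
  qed
  have gen: "cls k [c] \<in> A" for c
  proof -
    have "cls k [c] \<in> ?C" using carrier_iff[of "cls k [c]" k] by blast
    then have "cls k [c] \<in> sg_eval ?m ` L" using surj by simp
    then obtain \<gamma> where g: "\<gamma> \<in> L" "sg_eval ?m \<gamma> = cls k [c]" by (auto elim!: imageE)
    have gl: "\<gamma> \<in> lists A" "\<gamma> \<noteq> []" using g LA ne by auto
    have "length \<gamma> \<le> sz [c]" using lenW[OF gl(1)] evfk[OF gl g(2)] unfolding sz_def by simp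
    also have "sz [c] = 1" unfolding sz_def by (cases c) auto
    finally obtain x where "\<gamma> = [x]" using gl(2) by (cases \<gamma>) auto
    then show ?thesis using g gl by auto
  qed
  define Xa where "Xa = cls k [La]"
  define Xb where "Xb = cls k [Lb]"
  have XaA: "Xa \<in> A" and XbA: "Xb \<in> A" unfolding Xa_def Xb_def by (rule gen)+
  have hR: "\<And>\<beta>. \<beta> \<in> L \<Longrightarrow> length \<beta> \<le> h (sg_eval ?m \<beta>)"
    using hle LA ne by auto
  have hL: "\<And>\<alpha>. \<alpha> \<in> L \<Longrightarrow> length \<alpha> \<le> h (sg_eval ?m (\<alpha> @ [g]))" if "g \<in> A" for g
  proof -
    fix \<alpha> assume "\<alpha> \<in> L"
    then have "\<alpha> @ [g] \<in> lists A" using LA that by auto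
    then have "length (\<alpha> @ [g]) \<le> h (sg_eval ?m (\<alpha> @ [g]))" by (intro hle) auto
    then show "length \<alpha> \<le> h (sg_eval ?m (\<alpha> @ [g]))" by simp
  qed
  have rb: "regular_on (alphabet2 A) (L_dollar ?m L [Xb])" using regs XbA by blast
  have ra: "regular_on (alphabet2 A) (L_dollar ?m L [Xa])" using regs XaA by blast
  from bound_left[OF rb hL[OF XbA]] obtain N1 where N1: "\<forall>\<alpha> \<beta>. \<alpha> \<in> L \<longrightarrow> \<beta> \<in> L \<longrightarrow> sg_eval ?m (\<alpha>@[Xb]) = sg_eval ?m \<beta> \<longrightarrow> length \<alpha> \<le> length \<beta> + N1" ..
  from bound_right[OF ra hR] obtain N2 where N2: "\<forall>\<alpha> \<beta>. \<alpha> \<in> L \<longrightarrow> \<beta> \<in> L \<longrightarrow> sg_eval ?m (\<alpha>@[Xa]) = sg_eval ?m \<beta> \<longrightarrow> length \<beta> \<le> length \<alpha> + N2" ..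
  define N where "N = N1 + N2"
  define Cb where "Cb = (\<Sum>g\<in>A. fst (fk k (rep g)))"
  have fstb: "fst (fk k (W \<gamma>)) \<le> Cb * length \<gamma> * k ^ snd (fk k (W \<gamma>))" if "\<gamma> \<in> lists A" for \<gamma>
    using that
  proof (induction \<gamma>)
    case Nil then show ?case by (simp add: W_def)
  next
    case (Cons g \<gamma>)
    define p where "p = fst (fk k (rep g))"
    define q where "q = snd (fk k (rep g))"
    define i where "i = fst (fk k (W \<gamma>))"
    define j where "j = snd (fk k (W \<gamma>))"
    have e: "fk k (W (g # \<gamma>)) = (p + k ^ q * i, q + j)"
      unfolding W_def p_def q_def i_def j_def by (simp add: fk_append)
    have gA: "g \<in> A" using Cons by auto
    have pC: "p \<le> Cb" unfolding p_def Cb_def using gA finA by (intro member_le_sum) auto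
    have IH: "i \<le> Cb * length \<gamma> * k ^ j" using Cons unfolding i_def j_def by auto
    have "1 \<le> k ^ (q + j)" using k1 by simp
    then have "Cb \<le> Cb * k ^ (q + j)" by simp
    then have A1: "p \<le> Cb * k ^ (q + j)" using pC by (rule le_trans[rotated])
    have "k ^ q * i \<le> k ^ q * (Cb * length \<gamma> * k ^ j)" using IH by simp
    also have "k ^ q * (Cb * length \<gamma> * k ^ j) = Cb * length \<gamma> * k ^ (q + j)"
      by (simp add: power_add algebra_simps)
    finally have A2: "k ^ q * i \<le> Cb * length \<gamma> * k ^ (q + j)" .
    have "p + k ^ q * i \<le> Cb * k ^ (q + j) + Cb * length \<gamma> * k ^ (q + j)"
      by (rule add_mono[OF A1 A2])
    also have "\<dots> = Cb * (Suc (length \<gamma>)) * k ^ (q + j)" by (simp add: algebra_simps)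
    finally have "p + k ^ q * i \<le> Cb * (Suc (length \<gamma>)) * k ^ (q + j)" .
    then show ?case using e by simp
  qed
  obtain n where n1: "1 \<le> n" and big: "Cb * (n + N + n * N) < k ^ n"
    using arith_exists[OF k2] by blast
  define K where "K = k ^ n"
  have K1: "1 \<le> K" unfolding K_def using k1 by simp
  define w where "w t = replicate K La @ replicate t Lb" for t
  have wne: "w t \<noteq> []" for t unfolding w_def using K1 by simp
  define \<alpha> where "\<alpha> t = (SOME \<alpha>. \<alpha> \<in> L \<and> sg_eval ?m \<alpha> = cls k (w t))" for t
  have \<alpha>: "\<alpha> t \<in> L \<and> sg_eval ?m (\<alpha> t) = cls k (w t)" for t
  proof -
    have "cls k (w t) \<in> ?C" using carrier_iff[of "cls k (w t)" k] wne by blast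
    then have "cls k (w t) \<in> sg_eval ?m ` L" using surj by simp
    then obtain a where "a \<in> L \<and> sg_eval ?m a = cls k (w t)" by (auto elim!: imageE)
    then show ?thesis unfolding \<alpha>_def by (rule someI)
  qed
  have \<alpha>l: "\<alpha> t \<in> lists A" "\<alpha> t \<noteq> []" for t using \<alpha>[of t] LA ne by auto
  have step: "length (\<alpha> t) \<le> length (\<alpha> (Suc t)) + N1" for t
  proof -
    have "sg_eval ?m (\<alpha> t @ [Xb]) = ?m (cls k (w t)) (cls k [Lb])"
      using sg_eval_snoc[OF \<alpha>l(2)] \<alpha> unfolding Xb_def by simp
    also have "\<dots> = cls k (w (Suc t))" by (simp add: S_mult_cls w_def replicate_append_same[symmetric] del: replicate_append_same)
    finally have "sg_eval ?m (\<alpha> t @ [Xb]) = sg_eval ?m (\<alpha> (Suc t))" using \<alpha> by simp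
    then show ?thesis using N1[rule_format, OF conjunct1[OF \<alpha>[of t]] conjunct1[OF \<alpha>[of "Suc t"]]] by simp
  qed
  have chain: "length (\<alpha> 0) \<le> length (\<alpha> t) + t * N1" for t
  proof (induction t)
    case 0 then show ?case by simp
  next
    case (Suc t) then show ?case using step[of t] by simp
  qed
  have fk0: "fk k (W (\<alpha> 0)) = (K, 0)" using evfk[OF \<alpha>l] \<alpha> unfolding w_def by simp
  have "K \<le> Cb * length (\<alpha> 0)" using fstb[OF \<alpha>l(1)[of 0]] fk0 by simp
  define \<beta> where "\<beta> = (SOME \<beta>. \<beta> \<in> L \<and> sg_eval ?m \<beta> = cls k (replicate n Lb))"
  have \<beta>: "\<beta> \<in> L \<and> sg_eval ?m \<beta> = cls k (replicate n Lb)"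
  proof -
    have "replicate n Lb \<noteq> []" using n1 by simp
    then have "cls k (replicate n Lb) \<in> ?C" using carrier_iff[of "cls k (replicate n Lb)" k] by blast
    then have "cls k (replicate n Lb) \<in> sg_eval ?m ` L" using surj by simp
    then obtain a where "a \<in> L \<and> sg_eval ?m a = cls k (replicate n Lb)" by (auto elim!: imageE)
    then show ?thesis unfolding \<beta>_def by (rule someI)
  qed
  have \<beta>l: "\<beta> \<in> lists A" "\<beta> \<noteq> []" using \<beta> LA ne by auto
  have lb: "length \<beta> \<le> n" using lenW[OF \<beta>l(1)] evfk[OF \<beta>l] \<beta> unfolding sz_def by simp
  have "sg_eval ?m (\<beta> @ [Xa]) = ?m (cls k (replicate n Lb)) (cls k [La])"
    using sg_eval_snoc[OF \<beta>l(2)] \<beta> unfolding Xa_def by simp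
  also have "\<dots> = cls k (replicate n Lb @ [La])" by (simp add: S_mult_cls)
  also have "\<dots> = cls k (w n)" unfolding cls_eq w_def K_def by (simp add: fk_append)
  finally have "sg_eval ?m (\<beta> @ [Xa]) = sg_eval ?m (\<alpha> n)" using \<alpha> by simp
  then have "length (\<alpha> n) \<le> length \<beta> + N2" using N2[rule_format, OF conjunct1[OF \<beta>] conjunct1[OF \<alpha>[of n]]] by simp
  then have "length (\<alpha> n) \<le> n + N2" using lb by simp
  then have "length (\<alpha> 0) \<le> n + N2 + n * N1" using chain[of n] by simp
  also have "\<dots> \<le> n + N + n * N" unfolding N_def by (simp add: algebra_simps)
  finally have "K \<le> Cb * (n + N + n * N)"
    using \<open>K \<le> Cb * length (\<alpha> 0)\<close> by (meson le_trans mult_le_mono2)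
  then show False using big unfolding K_def by simp
qed



lemma regular_via_desc2:
  fixes \<delta> :: "nat \<Rightarrow> 'x \<Rightarrow> nat" and D :: "nat \<Rightarrow> 'x list set"
  assumes fin: "finite \<Sigma>" and sub: "L \<subseteq> lists \<Sigma>"
    and rng: "\<And>q x. \<delta> q x \<le> n" and qs: "qs \<le> n" and F: "F \<subseteq> {..n}"
    and C1: "\<And>q. q \<in> F \<Longrightarrow> [] \<in> D q"
    and C2: "\<And>q c w. w \<in> D (\<delta> q c) \<Longrightarrow> c # w \<in> D q"
    and DL: "D qs \<subseteq> L"
    and LA: "\<And>w. w \<in> L \<Longrightarrow> foldl \<delta> qs w \<in> F"
  shows "regular_on \<Sigma> L"
proof -
  have key: "foldl \<delta> q w \<in> F \<Longrightarrow> w \<in> D q" for q w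
    by (induction w arbitrary: q) (auto intro: C1 C2)
  have LL: "L = {w \<in> lists \<Sigma>. foldl \<delta> qs w \<in> F}" using sub key DL LA by auto
  show ?thesis unfolding regular_on_def
  proof (intro conjI fin sub)
    show "\<exists>(Q::nat set) qs \<delta> F. finite Q \<and> qs \<in> Q \<and> (\<forall>q\<in>Q. \<forall>x\<in>\<Sigma>. \<delta> q x \<in> Q) \<and> F \<subseteq> Q \<and>
        L = {w \<in> lists \<Sigma>. foldl \<delta> qs w \<in> F}"
      by (rule exI[of _ "{..n}"], rule exI[of _ qs], rule exI[of _ \<delta>], rule exI[of _ F])
         (use LL qs F rng in auto)
  qed
qed

lemma foldl_loop: "\<delta> q c = q \<Longrightarrow> foldl \<delta> q (replicate n c) = q"
  by (induction n) auto

lemma lang1: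
  assumes xy: "x \<noteq> y" and fin: "finite \<Sigma>" and xS: "x \<in> \<Sigma>" and yS: "y \<in> \<Sigma>"
  shows "regular_on \<Sigma> {replicate i x @ replicate j y | i j. 1 \<le> i + j}"
proof -
  define \<delta> where "\<delta> (q::nat) c = (if q \<le> 1 then (if c = x then 1 else if c = y then 2 else 3)
     else if q = 2 then (if c = y then 2 else 3) else (3::nat))" for q c
  define D where "D (q::nat) = (if q = 0 then {replicate i x @ replicate j y | i j. 1 \<le> i + j}
     else if q = 1 then {replicate i x @ replicate j y | i j. True}
     else if q = 2 then {replicate j y | j. True} else {})" for q
  show ?thesis
  proof (rule regular_via_desc2[where \<delta>=\<delta> and n=3 and qs=0 and F="{1,2}" and D=D])
    show "{replicate i x @ replicate j y | i j. 1 \<le> i + j} \<subseteq> lists \<Sigma>" using xS yS by auto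
    show "\<And>q c. \<delta> q c \<le> 3" unfolding \<delta>_def by auto
    show "\<And>q. q \<in> {1, 2} \<Longrightarrow> [] \<in> D q" unfolding D_def by auto
    show "D 0 \<subseteq> {replicate i x @ replicate j y | i j. 1 \<le> i + j}" unfolding D_def by simp
  next
    fix q c w assume w: "w \<in> D (\<delta> q c)"
    show "c # w \<in> D q"
    proof (cases "q \<le> 1")
      case True
      show ?thesis
      proof (cases "c = x")
        case True
        with \<open>q \<le> 1\<close> w obtain i j where "w = replicate i x @ replicate j y"
          unfolding \<delta>_def D_def by auto
        then have e: "c # w = replicate (Suc i) x @ replicate j y" using True by simp
        have ar: "1 \<le> Suc i + j" by simp
        have m0: "replicate (Suc i) x @ replicate j y \<in> {replicate i x @ replicate j y | i j. 1 \<le> i + j}"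
          using ar by blast
        have m1: "replicate (Suc i) x @ replicate j y \<in> {replicate i x @ replicate j y | i j. True}"
          by blast
        show ?thesis using m0 m1 \<open>q \<le> 1\<close> unfolding D_def e by (cases "q = 0") auto
      next
        case False
        with \<open>q \<le> 1\<close> w have cy: "c = y" and "\<exists>j. w = replicate j y"
          unfolding \<delta>_def D_def by (auto split: if_splits)
        then obtain j where "w = replicate j y" by blast
        then have e: "c # w = replicate 0 x @ replicate (Suc j) y" using cy by simp
        have ar: "1 \<le> 0 + Suc j" by simp
        have m0: "replicate 0 x @ replicate (Suc j) y \<in> {replicate i x @ replicate j y | i j. 1 \<le> i + j}"
          using ar by blast
        have m1: "replicate 0 x @ replicate (Suc j) y \<in> {replicate i x @ replicate j y | i j. True}"
          by blast
        show ?thesis using m0 m1 \<open>q \<le> 1\<close> unfolding D_def e by (cases "q = 0") auto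
      qed
    next
      case False
      with w have "q = 2" and cy: "c = y" and "\<exists>j. w = replicate j y"
        unfolding \<delta>_def D_def by (auto split: if_splits)
      then obtain j where "w = replicate j y" by blast
      then have "c # w = replicate (Suc j) y" using cy by simp
      then show ?thesis using \<open>q = 2\<close> unfolding D_def by (auto intro!: exI[of _ "Suc j"])
    qed
  next
    fix w assume "w \<in> {replicate i x @ replicate j y | i j. 1 \<le> i + j}"
    then obtain i j where w: "w = replicate i x @ replicate j y" "1 \<le> i + j" by auto
    have l1: "foldl \<delta> 1 (replicate n x) = 1" for n by (rule foldl_loop) (simp add: \<delta>_def)
    have l2: "foldl \<delta> 2 (replicate n y) = 2" for n by (rule foldl_loop) (simp add: \<delta>_def)
    have l3: "foldl \<delta> 1 (replicate j y) \<in> {1,2}"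
      by (cases j) (auto simp: \<delta>_def xy[symmetric] l2)
    show "foldl \<delta> 0 w \<in> {1, 2}"
    proof (cases i)
      case (Suc i')
      have "foldl \<delta> 0 w = foldl \<delta> (foldl \<delta> 1 (replicate i' x)) (replicate j y)"
        using w Suc by (simp add: \<delta>_def)
      then show ?thesis using l1 l3 by simp
    next
      case 0
      then obtain j' where "j = Suc j'" using w by (cases j) auto
      then have "foldl \<delta> 0 w = foldl \<delta> 2 (replicate j' y)" using w 0 xy by (simp add: \<delta>_def)
      then show ?thesis using l2 by simp
    qed
  qed (use fin in auto)
qed

lemma foldl_rep_Suc: "\<delta> q c = q' \<Longrightarrow> \<delta> q' c = q' \<Longrightarrow> foldl \<delta> q (replicate (Suc n) c) = q'"
  by (simp add: foldl_loop)

lemma lang_y: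
  assumes dis: "distinct [x, y, z]" and fin: "finite \<Sigma>" and S: "x \<in> \<Sigma>" "y \<in> \<Sigma>" "z \<in> \<Sigma>"
  shows "regular_on \<Sigma> {replicate i x @ replicate j y @ [z] | i j. 1 \<le> i + j}"
proof -
  define \<delta> where "\<delta> (q::nat) c = (if q \<le> 1 then (if c = x then 1 else if c = y then 2 else if c = z \<and> q = 1 then 3 else 4)
     else if q = 2 then (if c = y then 2 else if c = z then 3 else 4) else (4::nat))" for q c
  define D where "D (q::nat) = (if q = 0 then {replicate i x @ replicate j y @ [z] | i j. 1 \<le> i + j}
     else if q = 1 then {replicate i x @ replicate j y @ [z] | i j. True}
     else if q = 2 then {replicate j y @ [z] | j. True} else if q = 3 then {[]} else {})" for q
  show ?thesis
  proof (rule regular_via_desc2[where \<delta>=\<delta> and n=4 and qs=0 and F="{3}" and D=D])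
    show "{replicate i x @ replicate j y @ [z] | i j. 1 \<le> i + j} \<subseteq> lists \<Sigma>" using S by auto
    show "\<And>q c. \<delta> q c \<le> 4" unfolding \<delta>_def by auto
    show "\<And>q. q \<in> {3} \<Longrightarrow> [] \<in> D q" unfolding D_def by auto
    show "D 0 \<subseteq> {replicate i x @ replicate j y @ [z] | i j. 1 \<le> i + j}" unfolding D_def by simp
  next
    fix q c w assume w: "w \<in> D (\<delta> q c)"
    show "c # w \<in> D q"
    proof (cases "q \<le> 1")
      case True
      consider "c = x" | "c = y" | "c = z" "q = 1"
        using w True dis unfolding \<delta>_def D_def by (auto split: if_splits)
      then show ?thesis
      proof cases
        case 1
        with \<open>q \<le> 1\<close> w obtain i j where "w = replicate i x @ replicate j y @ [z]"
          unfolding \<delta>_def D_def by auto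
        then have e: "c # w = replicate (Suc i) x @ replicate j y @ [z]" using 1 by simp
        have ar: "1 \<le> Suc i + j" by simp
        have m0: "replicate (Suc i) x @ replicate j y @ [z] \<in> {replicate i x @ replicate j y @ [z] | i j. 1 \<le> i + j}"
          using ar by blast
        have m1: "replicate (Suc i) x @ replicate j y @ [z] \<in> {replicate i x @ replicate j y @ [z] | i j. True}"
          by blast
        show ?thesis using m0 m1 \<open>q \<le> 1\<close> unfolding D_def e by (cases "q = 0") auto
      next
        case 2
        with \<open>q \<le> 1\<close> w dis obtain j where "w = replicate j y @ [z]"
          unfolding \<delta>_def D_def by auto
        then have e: "c # w = replicate 0 x @ replicate (Suc j) y @ [z]" using 2 by simp
        have ar: "1 \<le> 0 + Suc j" by simp
        have m0: "replicate 0 x @ replicate (Suc j) y @ [z] \<in> {replicate i x @ replicate j y @ [z] | i j. 1 \<le> i + j}"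
          using ar by blast
        have m1: "replicate 0 x @ replicate (Suc j) y @ [z] \<in> {replicate i x @ replicate j y @ [z] | i j. True}"
          by blast
        show ?thesis using m0 m1 \<open>q \<le> 1\<close> unfolding D_def e by (cases "q = 0") auto
      next
        case 3
        with w dis have "w = []" unfolding \<delta>_def D_def by auto
        then have e: "c # w = replicate 0 x @ replicate 0 y @ [z]" using 3 by simp
        have m1: "replicate 0 x @ replicate 0 y @ [z] \<in> {replicate i x @ replicate j y @ [z] | i j. True}"
          by blast
        show ?thesis using m1 3 unfolding D_def e by auto
      qed
    next
      case False
      with w dis have q2: "q = 2" and cyz: "c = y \<or> c = z"
        unfolding \<delta>_def D_def by (auto split: if_splits)
      show ?thesis
      proof (cases "c = y")
        case True
        with q2 w dis obtain j where "w = replicate j y @ [z]" unfolding \<delta>_def D_def by auto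
        then have e: "c # w = replicate (Suc j) y @ [z]" using True by simp
        have m: "replicate (Suc j) y @ [z] \<in> {replicate j y @ [z] | j. True}" by blast
        show ?thesis using m q2 unfolding D_def e by auto
      next
        case False
        with cyz q2 w dis have "w = []" "c = z" unfolding \<delta>_def D_def by auto
        then have e: "c # w = replicate 0 y @ [z]" by simp
        have m: "replicate 0 y @ [z] \<in> {replicate j y @ [z] | j. True}" by blast
        show ?thesis using m q2 unfolding D_def e by auto
      qed
    qed
  next
    fix w assume "w \<in> {replicate i x @ replicate j y @ [z] | i j. 1 \<le> i + j}"
    then obtain i j where w: "w = replicate i x @ replicate j y @ [z]" "1 \<le> i + j" by auto
    have l1: "foldl \<delta> 1 (replicate n x) = 1" for n by (rule foldl_loop) (simp add: \<delta>_def)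
    have l2: "foldl \<delta> 2 (replicate n y) = 2" for n by (rule foldl_loop) (simp add: \<delta>_def)
    have l3: "foldl \<delta> 1 (replicate j y @ [z]) = 3"
      using dis by (cases j) (auto simp: \<delta>_def l2)
    show "foldl \<delta> 0 w \<in> {3}"
    proof (cases i)
      case (Suc i')
      have "foldl \<delta> 0 w = foldl \<delta> (foldl \<delta> 1 (replicate i' x)) (replicate j y @ [z])"
        using w Suc by (simp add: \<delta>_def)
      then show ?thesis using l1 l3 by simp
    next
      case 0
      then obtain j' where j: "j = Suc j'" using w by (cases j) auto
      have d0: "\<delta> 0 y = 2" "\<delta> 2 z = 3" using dis by (auto simp: \<delta>_def)
      have "foldl \<delta> 0 w = \<delta> (foldl \<delta> 2 (replicate j' y)) z" using w 0 j d0 by simp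
      then show ?thesis using l2 d0 by simp
    qed
  qed (use fin in auto)
qed

lemma lang_x1:
  assumes dis: "distinct [x, y, z, u, v]" and fin: "finite \<Sigma>"
    and S: "x \<in> \<Sigma>" "y \<in> \<Sigma>" "z \<in> \<Sigma>" "u \<in> \<Sigma>" "v \<in> \<Sigma>"
  shows "regular_on \<Sigma> ({replicate i x @ [z] | i. 1 \<le> i} \<union> {replicate i x @ [u] @ replicate j y @ [v] | i j. True})"
    (is "regular_on \<Sigma> ?T")
proof -
  define \<delta> where "\<delta> (q::nat) c = (if q \<le> 1 then (if c = x then 1 else if c = u then 2 else if c = z \<and> q = 1 then 3 else 4)
     else if q = 2 then (if c = y then 2 else if c = v then 3 else 4) else (4::nat))" for q c
  define D1 where "D1 = {replicate i x @ [z] | i. True} \<union> {replicate i x @ [u] @ replicate j y @ [v] | i j. True}"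
  define D where "D (q::nat) = (if q = 0 then ?T else if q = 1 then D1
     else if q = 2 then {replicate j y @ [v] | j. True} else if q = 3 then {[]} else {})" for q
  show ?thesis
  proof (rule regular_via_desc2[where \<delta>=\<delta> and n=4 and qs=0 and F="{3}" and D=D])
    show "?T \<subseteq> lists \<Sigma>" using S by auto
    show "\<And>q c. \<delta> q c \<le> 4" unfolding \<delta>_def by auto
    show "\<And>q. q \<in> {3} \<Longrightarrow> [] \<in> D q" unfolding D_def by auto
    show "D 0 \<subseteq> ?T" unfolding D_def by simp
  next
    fix q c w assume w: "w \<in> D (\<delta> q c)"
    show "c # w \<in> D q"
    proof (cases "q \<le> 1")
      case True
      consider "c = x" | "c = u" | "c = z" "q = 1"
        using w True dis unfolding \<delta>_def D_def by (auto split: if_splits)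
      then show ?thesis
      proof cases
        case 1
        with \<open>q \<le> 1\<close> w have "w \<in> D1" unfolding \<delta>_def D_def by auto
        then consider i where "w = replicate i x @ [z]" | i j where "w = replicate i x @ [u] @ replicate j y @ [v]"
          unfolding D1_def by blast
        then show ?thesis
        proof cases
          case (1 i)
          then have e: "c # w = replicate (Suc i) x @ [z]" using \<open>c = x\<close> by simp
          have ar: "1 \<le> Suc i" by simp
          have m0: "replicate (Suc i) x @ [z] \<in> ?T" using ar by blast
          have m1: "replicate (Suc i) x @ [z] \<in> D1" unfolding D1_def by blast
          show ?thesis using m0 m1 \<open>q \<le> 1\<close> unfolding D_def e by (cases "q = 0") auto
        next
          case (2 i j)
          then have e: "c # w = replicate (Suc i) x @ [u] @ replicate j y @ [v]" using \<open>c = x\<close> by simp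
          have m0: "replicate (Suc i) x @ [u] @ replicate j y @ [v] \<in> ?T" by blast
          have m1: "replicate (Suc i) x @ [u] @ replicate j y @ [v] \<in> D1" unfolding D1_def by blast
          show ?thesis using m0 m1 \<open>q \<le> 1\<close> unfolding D_def e by (cases "q = 0") auto
        qed
      next
        case 2
        with \<open>q \<le> 1\<close> w dis obtain j where "w = replicate j y @ [v]"
          unfolding \<delta>_def D_def by auto
        then have e: "c # w = replicate 0 x @ [u] @ replicate j y @ [v]" using 2 by simp
        have m0: "replicate 0 x @ [u] @ replicate j y @ [v] \<in> ?T" by blast
        have m1: "replicate 0 x @ [u] @ replicate j y @ [v] \<in> D1" unfolding D1_def by blast
        show ?thesis using m0 m1 \<open>q \<le> 1\<close> unfolding D_def e by (cases "q = 0") auto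
      next
        case 3
        with w dis have "w = []" unfolding \<delta>_def D_def by auto
        then have e: "c # w = replicate 0 x @ [z]" using 3 by simp
        have m1: "replicate 0 x @ [z] \<in> D1" unfolding D1_def by blast
        show ?thesis using m1 3 unfolding D_def e by auto
      qed
    next
      case False
      with w dis have q2: "q = 2" and cyz: "c = y \<or> c = v"
        unfolding \<delta>_def D_def by (auto split: if_splits)
      show ?thesis
      proof (cases "c = y")
        case True
        with q2 w dis obtain j where "w = replicate j y @ [v]" unfolding \<delta>_def D_def by auto
        then have e: "c # w = replicate (Suc j) y @ [v]" using True by simp
        have m: "replicate (Suc j) y @ [v] \<in> {replicate j y @ [v] | j. True}" by blast
        show ?thesis using m q2 unfolding D_def e by auto
      next
        case False
        with cyz q2 w dis have "w = []" "c = v" unfolding \<delta>_def D_def by auto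
        then have e: "c # w = replicate 0 y @ [v]" by simp
        have m: "replicate 0 y @ [v] \<in> {replicate j y @ [v] | j. True}" by blast
        show ?thesis using m q2 unfolding D_def e by auto
      qed
    qed
  next
    fix w assume "w \<in> ?T"
    have l1: "foldl \<delta> 1 (replicate n x) = 1" for n by (rule foldl_loop) (simp add: \<delta>_def)
    have l2: "foldl \<delta> 2 (replicate n y) = 2" for n by (rule foldl_loop) (simp add: \<delta>_def)
    have d: "\<delta> 0 x = 1" "\<delta> 1 z = 3" "\<delta> 0 u = 2" "\<delta> 1 u = 2" "\<delta> 2 v = 3"
      using dis by (auto simp: \<delta>_def)
    have l0: "foldl \<delta> 0 (replicate i x) \<in> {0, 1}" for i
      using l1 d by (cases i) auto
    have l0u: "\<delta> (foldl \<delta> 0 (replicate i x)) u = 2" for i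
      using l0[of i] d by auto
    from \<open>w \<in> ?T\<close> consider i where "w = replicate i x @ [z]" "1 \<le> i"
      | i j where "w = replicate i x @ [u] @ replicate j y @ [v]" by blast
    then show "foldl \<delta> 0 w \<in> {3}"
    proof cases
      case (1 i)
      then obtain i' where "i = Suc i'" by (cases i) auto
      then show ?thesis using 1 l1 d by simp
    next
      case (2 i j)
      then show ?thesis using l0u l2 d by simp
    qed
  qed (use fin in auto)
qed

lemma lang_x0:
  assumes dis: "distinct [x, y, z]" and fin: "finite \<Sigma>"
    and S: "x \<in> \<Sigma>" "y \<in> \<Sigma>" "z \<in> \<Sigma>"
  shows "regular_on \<Sigma> ({replicate i x @ [z] | i. 1 \<le> i} \<union> {replicate i x @ replicate j y | i j. 1 \<le> j})"
    (is "regular_on \<Sigma> ?T")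
proof -
  define \<delta> where "\<delta> (q::nat) c = (if q \<le> 1 then (if c = x then 1 else if c = y then 2 else if c = z \<and> q = 1 then 3 else 4)
     else if q = 2 then (if c = y then 2 else 4) else (4::nat))" for q c
  define D1 where "D1 = {replicate i x @ [z] | i. True} \<union> {replicate i x @ replicate j y | i j. 1 \<le> j}"
  define D where "D (q::nat) = (if q = 0 then ?T else if q = 1 then D1
     else if q = 2 then {replicate j y | j. True} else if q = 3 then {[]} else {})" for q
  show ?thesis
  proof (rule regular_via_desc2[where \<delta>=\<delta> and n=4 and qs=0 and F="{2,3}" and D=D])
    show "?T \<subseteq> lists \<Sigma>" using S by auto
    show "\<And>q c. \<delta> q c \<le> 4" unfolding \<delta>_def by auto
    show "\<And>q. q \<in> {2,3} \<Longrightarrow> [] \<in> D q" unfolding D_def by auto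
    show "D 0 \<subseteq> ?T" unfolding D_def by simp
  next
    fix q c w assume w: "w \<in> D (\<delta> q c)"
    show "c # w \<in> D q"
    proof (cases "q \<le> 1")
      case True
      consider "c = x" | "c = y" | "c = z" "q = 1"
        using w True dis unfolding \<delta>_def D_def by (auto split: if_splits)
      then show ?thesis
      proof cases
        case 1
        with \<open>q \<le> 1\<close> w have "w \<in> D1" unfolding \<delta>_def D_def by auto
        then consider i where "w = replicate i x @ [z]" | i j where "w = replicate i x @ replicate j y" "1 \<le> j"
          unfolding D1_def by blast
        then show ?thesis
        proof cases
          case (1 i)
          then have e: "c # w = replicate (Suc i) x @ [z]" using \<open>c = x\<close> by simp
          have ar: "1 \<le> Suc i" by simp
          have m0: "replicate (Suc i) x @ [z] \<in> ?T" using ar by blast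
          have m1: "replicate (Suc i) x @ [z] \<in> D1" unfolding D1_def by blast
          show ?thesis using m0 m1 \<open>q \<le> 1\<close> unfolding D_def e by (cases "q = 0") auto
        next
          case (2 i j)
          then have e: "c # w = replicate (Suc i) x @ replicate j y" using \<open>c = x\<close> by simp
          have m0: "replicate (Suc i) x @ replicate j y \<in> ?T" using 2 by blast
          have m1: "replicate (Suc i) x @ replicate j y \<in> D1" unfolding D1_def using 2 by blast
          show ?thesis using m0 m1 \<open>q \<le> 1\<close> unfolding D_def e by (cases "q = 0") auto
        qed
      next
        case 2
        with \<open>q \<le> 1\<close> w dis obtain j where "w = replicate j y"
          unfolding \<delta>_def D_def by auto
        then have e: "c # w = replicate 0 x @ replicate (Suc j) y" using 2 by simp
        have ar: "1 \<le> Suc j" by simp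
        have m0: "replicate 0 x @ replicate (Suc j) y \<in> ?T" using ar by blast
        have m1: "replicate 0 x @ replicate (Suc j) y \<in> D1" unfolding D1_def using ar by blast
        show ?thesis using m0 m1 \<open>q \<le> 1\<close> unfolding D_def e by (cases "q = 0") auto
      next
        case 3
        with w dis have "w = []" unfolding \<delta>_def D_def by auto
        then have e: "c # w = replicate 0 x @ [z]" using 3 by simp
        have m1: "replicate 0 x @ [z] \<in> D1" unfolding D1_def by blast
        show ?thesis using m1 3 unfolding D_def e by auto
      qed
    next
      case False
      with w dis have q2: "q = 2" and cy: "c = y"
        unfolding \<delta>_def D_def by (auto split: if_splits)
      with w dis obtain j where "w = replicate j y" unfolding \<delta>_def D_def by auto
      then have e: "c # w = replicate (Suc j) y" using cy by simp
      have m: "replicate (Suc j) y \<in> {replicate j y | j. True}" by blast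
      show ?thesis using m q2 unfolding D_def e by auto
    qed
  next
    fix w assume "w \<in> ?T"
    have l1: "foldl \<delta> 1 (replicate n x) = 1" for n by (rule foldl_loop) (simp add: \<delta>_def)
    have l2: "foldl \<delta> 2 (replicate n y) = 2" for n by (rule foldl_loop) (simp add: \<delta>_def)
    have d: "\<delta> 0 x = 1" "\<delta> 1 z = 3" "\<delta> 0 y = 2" "\<delta> 1 y = 2"
      using dis by (auto simp: \<delta>_def)
    have l0: "foldl \<delta> 0 (replicate i x) \<in> {0, 1}" for i
      using l1 d by (cases i) auto
    have l0y: "\<delta> (foldl \<delta> 0 (replicate i x)) y = 2" for i
      using l0[of i] d by auto
    from \<open>w \<in> ?T\<close> consider i where "w = replicate i x @ [z]" "1 \<le> i"
      | i j where "w = replicate i x @ replicate j y" "1 \<le> j" by blast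
    then show "foldl \<delta> 0 w \<in> {2,3}"
    proof cases
      case (1 i)
      then obtain i' where "i = Suc i'" by (cases i) auto
      then show ?thesis using 1 l1 d by simp
    next
      case (2 i j)
      then obtain j' where "j = Suc j'" by (cases j) auto
      then show ?thesis using 2 l0y l2 d by simp
    qed
  qed (use fin in auto)
qed



lemma concat_rep_single: "concat (replicate i [a]) = replicate i a"
  by (induction i) auto

lemma pad_rep_prefix: "pad (replicate i a @ u) (replicate i a @ v) = replicate i (Some a, Some a) @ pad u v"
  by (induction i) (auto simp: pad_Cons)

lemma pad_rep_rep: "pad (replicate j a) (replicate j b) = replicate j (Some a, Some b)"
  by (induction j) (auto simp: pad_Cons)

lemma pad_rep_rep_snoc: "pad (replicate j a) (replicate j b @ [c]) = replicate j (Some a, Some b) @ [(None, Some c)]"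
  using pad_append_right[of "replicate j a" "replicate j b" "[c]"] by (simp add: pad_rep_rep)

lemma rep_Suc_snoc: "replicate (Suc n) x = replicate n x @ [x]"
  by (induction n) auto

lemma pad_rep_Suc: "pad (replicate j a) (replicate (Suc j) b) = replicate j (Some a, Some b) @ [(None, Some b)]"
  unfolding rep_Suc_snoc[of j b] by (rule pad_rep_rep_snoc)

lemma fin_alph: "finite A \<Longrightarrow> finite (alphabet2 A)"
  unfolding alphabet2_def by simp

lemma prefix_automatic_le1:
  assumes k1: "k \<le> 1"
  shows "prefix_automatic_sg (S_carrier k) (S_mult k)"
proof -
  let ?C = "S_carrier k" and ?m = "S_mult k"
  define X where "X = cls k [La]"
  define Y where "Y = cls k [Lb]"
  have XY: "X \<noteq> Y" unfolding X_def Y_def cls_eq by simp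
  define A where "A = {X, Y}"
  define L where "L = {replicate i X @ replicate j Y | i j. 1 \<le> i + j}"
  define r where "r g = (if g = X then [La] else [Lb])" for g
  have rA: "g = cls k (r g)" if "g \<in> A" for g
    using that XY unfolding A_def r_def X_def Y_def by auto
  have ev: "sg_eval ?m \<gamma> = cls k (concat (map r \<gamma>))" if "\<gamma> \<in> lists A" "\<gamma> \<noteq> []" for \<gamma>
    using that rA by (intro eval_cls) auto
  have rXY: "r X = [La]" "r Y = [Lb]" using XY unfolding r_def by auto
  have cm: "concat (map r (replicate i X @ replicate j Y)) = replicate i La @ replicate j Lb" for i j
    using XY by (simp add: r_def map_replicate_const concat_rep_single)
  have LA: "L \<subseteq> lists A" unfolding L_def A_def by auto
  have Lne: "\<forall>w\<in>L. w \<noteq> []" unfolding L_def by auto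
  have AC: "A \<subseteq> ?C" unfolding A_def X_def Y_def using carrier_iff by blast
  have finA: "finite A" unfolding A_def by simp
  have fknf: "fk k (replicate i La @ replicate j Lb) = (i, j)" for i j by (simp add: fk_append)
  have surj: "sg_eval ?m ` L = ?C"
  proof
    show "sg_eval ?m ` L \<subseteq> ?C"
    proof
      fix Z assume "Z \<in> sg_eval ?m ` L"
      then obtain i j where ij: "1 \<le> i + j" "Z = sg_eval ?m (replicate i X @ replicate j Y)"
        unfolding L_def by auto
      have "replicate i X @ replicate j Y \<in> lists A" "replicate i X @ replicate j Y \<noteq> []"
        using ij(1) unfolding A_def by auto
      then have "Z = cls k (replicate i La @ replicate j Lb)" using ij(2) ev cm by simp
      moreover have "replicate i La @ replicate j Lb \<noteq> []" using ij(1) by auto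
      ultimately show "Z \<in> ?C" using carrier_iff by blast
    qed
  next
    show "?C \<subseteq> sg_eval ?m ` L"
    proof
      fix Z assume "Z \<in> ?C"
      then obtain w where w: "w \<noteq> []" "Z = cls k w" using carrier_iff by blast
      define i where "i = fst (fk k w)"
      define j where "j = snd (fk k w)"
      have ij: "1 \<le> i + j" using fk_nonzero[OF w(1)] unfolding i_def j_def by simp
      have "Z = cls k (replicate i La @ replicate j Lb)" unfolding w(2) cls_eq fknf i_def j_def by simp
      moreover have "replicate i X @ replicate j Y \<in> lists A" "replicate i X @ replicate j Y \<noteq> []"
        using ij unfolding A_def by auto
      ultimately have "Z = sg_eval ?m (replicate i X @ replicate j Y)" using ev cm by simp
      moreover have "replicate i X @ replicate j Y \<in> L" unfolding L_def using ij by blast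
      ultimately show "Z \<in> sg_eval ?m ` L" by blast
    qed
  qed
  have ld: "L_dollar ?m L a = {pad (replicate i X @ replicate j Y) (replicate i' X @ replicate j' Y) | i j i' j'.
      1 \<le> i + j \<and> 1 \<le> i' + j' \<and> fk k (replicate i La @ replicate j Lb @ concat (map r a)) = (i', j')}"
    if "a \<in> lists A" for a
  proof -
    have e: "sg_eval ?m ((replicate i X @ replicate j Y) @ a) = sg_eval ?m (replicate i' X @ replicate j' Y)
      \<longleftrightarrow> fk k (replicate i La @ replicate j Lb @ concat (map r a)) = (i', j')"
      if "1 \<le> i + j" "1 \<le> i' + j'" for i j i' j'
    proof -
      have l1: "(replicate i X @ replicate j Y) @ a \<in> lists A" "(replicate i X @ replicate j Y) @ a \<noteq> []"
        using \<open>a \<in> lists A\<close> that unfolding A_def by auto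
      have l2: "replicate i' X @ replicate j' Y \<in> lists A" "replicate i' X @ replicate j' Y \<noteq> []"
        using that unfolding A_def by auto
      show ?thesis using ev[OF l1] ev[OF l2] fknf[of i' j']
        by (simp add: cls_eq rXY concat_rep_single)
    qed
    show ?thesis unfolding L_dollar_def L_def using e by blast
  qed
  define XX where "XX = (Some X, Some X)"
  define YY where "YY = (Some Y, Some Y)"
  define YX where "YX = (Some Y, Some X)"
  define NX where "NX = (None :: ab list set option, Some X)"
  define NY where "NY = (None :: ab list set option, Some Y)"
  have inS: "XX \<in> alphabet2 A" "YY \<in> alphabet2 A" "YX \<in> alphabet2 A" "NX \<in> alphabet2 A" "NY \<in> alphabet2 A"
    unfolding XX_def YY_def YX_def NX_def NY_def alphabet2_def A_def by auto
  have finS: "finite (alphabet2 A)" using finA by (rule fin_alph)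
  have dis3: "distinct [XX, YY, NY]" "distinct [XX, YY, NX]"
    using XY unfolding XX_def YY_def NY_def NX_def by auto
  have dis5: "distinct [XX, YY, NX, YX, NY]"
    using XY unfolding XX_def YY_def NY_def NX_def YX_def by auto
  have padd: "pad (replicate i X @ replicate j Y) (replicate i X @ replicate j Y) = replicate i XX @ replicate j YY" for i j
    unfolding XX_def YY_def by (simp add: pad_rep_prefix pad_rep_rep)
  have Leps: "L_dollar ?m L [] = {replicate i XX @ replicate j YY | i j. 1 \<le> i + j}"
  proof -
    have "L_dollar ?m L [] = {pad (replicate i X @ replicate j Y) (replicate i X @ replicate j Y) | i j. 1 \<le> i + j}"
      using ld[of "[]"] fknf by auto
    then show ?thesis by (simp add: padd)
  qed
  have regeps: "regular_on (alphabet2 A) (L_dollar ?m L [])"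
    unfolding Leps using dis3 finS inS by (intro lang1) auto
  have LY: "L_dollar ?m L [Y] = {replicate i XX @ replicate j YY @ [NY] | i j. 1 \<le> i + j}"
  proof -
    have "concat (map r [Y]) = [Lb]" using XY by (simp add: r_def)
    then have "L_dollar ?m L [Y] = {pad (replicate i X @ replicate j Y) (replicate i X @ replicate (Suc j) Y) | i j. 1 \<le> i + j}"
      using ld[of "[Y]"] unfolding A_def by (auto simp: fk_append)
    moreover have "pad (replicate i X @ replicate j Y) (replicate i X @ replicate (Suc j) Y) = replicate i XX @ replicate j YY @ [NY]" for i j
      unfolding XX_def YY_def NY_def
      by (simp add: pad_rep_prefix pad_rep_Suc del: replicate.simps(2))
    ultimately show ?thesis by simp
  qed
  have regY: "regular_on (alphabet2 A) (L_dollar ?m L [Y])"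
    unfolding LY using dis3 finS inS by (intro lang_y) auto
  have LX0: "L_dollar ?m L [X] = {pad (replicate i X @ replicate j Y) (replicate (i + k ^ j) X @ replicate j Y) | i j. 1 \<le> i + j}"
  proof -
    have c: "concat (map r [X]) = [La]" by (simp add: r_def)
    have aX: "[X] \<in> lists A" unfolding A_def by simp
    note ldX = ld[OF aX]
    show ?thesis
    proof (intro equalityI subsetI)
      fix w assume "w \<in> L_dollar ?m L [X]"
      then obtain i j i' j' where w: "w = pad (replicate i X @ replicate j Y) (replicate i' X @ replicate j' Y)"
        "1 \<le> i + j" "fk k (replicate i La @ replicate j Lb @ concat (map r [X])) = (i', j')"
        unfolding ldX by blast
      then have "i' = i + k ^ j" "j' = j" by (auto simp: c rXY fk_append)
      then show "w \<in> {pad (replicate i X @ replicate j Y) (replicate (i + k ^ j) X @ replicate j Y) | i j. 1 \<le> i + j}"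
        using w by blast
    next
      fix w assume "w \<in> {pad (replicate i X @ replicate j Y) (replicate (i + k ^ j) X @ replicate j Y) | i j. 1 \<le> i + j}"
      then obtain i j where w: "w = pad (replicate i X @ replicate j Y) (replicate (i + k ^ j) X @ replicate j Y)" "1 \<le> i + j"
        by blast
      moreover have "fk k (replicate i La @ replicate j Lb @ concat (map r [X])) = (i + k ^ j, j)"
        by (simp add: c rXY fk_append)
      moreover have "1 \<le> i + k ^ j + j" using w(2) by simp
      ultimately show "w \<in> L_dollar ?m L [X]" unfolding ldX by blast
    qed
  qed
  have regX: "regular_on (alphabet2 A) (L_dollar ?m L [X])"
  proof (cases "k = 1")
    case True
    have "L_dollar ?m L [X] = {replicate i XX @ [NX] | i. 1 \<le> i} \<union> {replicate i XX @ [YX] @ replicate j YY @ [NY] | i j. True}"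
    proof -
      have p1: "pad (replicate i X) (replicate (Suc i) X) = replicate i XX @ [NX]" for i
        unfolding XX_def NX_def
        by (rule pad_rep_Suc)
      have p2: "pad (replicate i X @ replicate (Suc j) Y) (replicate (Suc i) X @ replicate (Suc j) Y)
          = replicate i XX @ [YX] @ replicate j YY @ [NY]" for i j
      proof -
        have eq: "replicate (Suc i) X @ replicate (Suc j) Y = replicate i X @ (X # replicate (Suc j) Y)"
          unfolding rep_Suc_snoc[of i X] by simp
        have "pad (replicate i X @ replicate (Suc j) Y) (replicate (Suc i) X @ replicate (Suc j) Y)
            = pad (replicate i X @ replicate (Suc j) Y) (replicate i X @ (X # replicate (Suc j) Y))"
          by (simp only: eq)
        also have "\<dots> = replicate i XX @ pad (replicate (Suc j) Y) (X # replicate (Suc j) Y)"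
          unfolding XX_def by (rule pad_rep_prefix)
        finally have s1: "pad (replicate i X @ replicate (Suc j) Y) (replicate (Suc i) X @ replicate (Suc j) Y)
          = replicate i XX @ pad (replicate (Suc j) Y) (X # replicate (Suc j) Y)" .
        have s3: "pad (replicate (Suc j) Y) (X # replicate (Suc j) Y) = YX # pad (replicate j Y) (replicate (Suc j) Y)"
          unfolding YX_def by (simp add: pad_Cons)
        have s4: "pad (replicate j Y) (replicate (Suc j) Y) = replicate j YY @ [NY]"
          unfolding YY_def NY_def by (rule pad_rep_Suc)
        show ?thesis unfolding s1 s3 s4 by simp
      qed
      show ?thesis
      proof
        show "L_dollar ?m L [X] \<subseteq> {replicate i XX @ [NX] | i. 1 \<le> i} \<union> {replicate i XX @ [YX] @ replicate j YY @ [NY] | i j. True}"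
        proof
          fix w assume "w \<in> L_dollar ?m L [X]"
          then obtain i j where w: "w = pad (replicate i X @ replicate j Y) (replicate (Suc i) X @ replicate j Y)" "1 \<le> i + j"
            unfolding LX0 using True by auto
          show "w \<in> {replicate i XX @ [NX] | i. 1 \<le> i} \<union> {replicate i XX @ [YX] @ replicate j YY @ [NY] | i j. True}"
          proof (cases j)
            case 0 then show ?thesis using w p1 by auto
          next
            case (Suc j') then show ?thesis using w p2[of i j'] by blast
          qed
        qed
      next
        show "{replicate i XX @ [NX] | i. 1 \<le> i} \<union> {replicate i XX @ [YX] @ replicate j YY @ [NY] | i j. True} \<subseteq> L_dollar ?m L [X]"
        proof
          fix w assume "w \<in> {replicate i XX @ [NX] | i. 1 \<le> i} \<union> {replicate i XX @ [YX] @ replicate j YY @ [NY] | i j. True}"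
          then consider i where "w = replicate i XX @ [NX]" "1 \<le> i" | i j where "w = replicate i XX @ [YX] @ replicate j YY @ [NY]"
            by blast
          then show "w \<in> L_dollar ?m L [X]"
          proof cases
            case (1 i)
            then have "w = pad (replicate i X @ replicate 0 Y) (replicate (i + k ^ 0) X @ replicate 0 Y)"
              using p1 by simp
            moreover have "1 \<le> i + (0::nat)" using 1 by simp
            ultimately show ?thesis unfolding LX0 by blast
          next
            case (2 i j)
            then have "w = pad (replicate i X @ replicate (Suc j) Y) (replicate (i + k ^ (Suc j)) X @ replicate (Suc j) Y)"
              using p2 True by simp
            moreover have "1 \<le> i + Suc j" by simp
            ultimately show ?thesis unfolding LX0 by blast
          qed
        qed
      qed
    qed
    then show ?thesis using dis5 finS inS by (simp only:) (rule lang_x1, auto)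
  next
    case False
    then have k0: "k = 0" using k1 by simp
    have "L_dollar ?m L [X] = {replicate i XX @ [NX] | i. 1 \<le> i} \<union> {replicate i XX @ replicate j YY | i j. 1 \<le> j}"
    proof -
      have p1: "pad (replicate i X) (replicate (Suc i) X) = replicate i XX @ [NX]" for i
        unfolding XX_def NX_def
        by (rule pad_rep_Suc)
      show ?thesis
      proof
        show "L_dollar ?m L [X] \<subseteq> {replicate i XX @ [NX] | i. 1 \<le> i} \<union> {replicate i XX @ replicate j YY | i j. 1 \<le> j}"
        proof
          fix w assume "w \<in> L_dollar ?m L [X]"
          then obtain i j where w: "w = pad (replicate i X @ replicate j Y) (replicate (i + 0 ^ j) X @ replicate j Y)" "1 \<le> i + j"
            unfolding LX0 using k0 by auto
          show "w \<in> {replicate i XX @ [NX] | i. 1 \<le> i} \<union> {replicate i XX @ replicate j YY | i j. 1 \<le> j}"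
          proof (cases j)
            case 0 then show ?thesis using w p1 by auto
          next
            case (Suc j')
            have "w = replicate i XX @ replicate j YY" using w(1) padd[of i j] Suc by simp
            moreover have "1 \<le> j" using Suc by simp
            ultimately show ?thesis by blast
          qed
        qed
      next
        show "{replicate i XX @ [NX] | i. 1 \<le> i} \<union> {replicate i XX @ replicate j YY | i j. 1 \<le> j} \<subseteq> L_dollar ?m L [X]"
        proof
          fix w assume "w \<in> {replicate i XX @ [NX] | i. 1 \<le> i} \<union> {replicate i XX @ replicate j YY | i j. 1 \<le> j}"
          then consider i where "w = replicate i XX @ [NX]" "1 \<le> i" | i j where "w = replicate i XX @ replicate j YY" "1 \<le> j"
            by blast
          then show "w \<in> L_dollar ?m L [X]"
          proof cases
            case (1 i)
            then have "w = pad (replicate i X @ replicate 0 Y) (replicate (i + k ^ 0) X @ replicate 0 Y)"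
              using p1 by simp
            moreover have "1 \<le> i + (0::nat)" using 1 by simp
            ultimately show ?thesis unfolding LX0 by blast
          next
            case (2 i j)
            have kj: "i + k ^ j = i" using k0 2 by (simp add: power_0_left)
            have "w = pad (replicate i X @ replicate j Y) (replicate (i + k ^ j) X @ replicate j Y)"
              unfolding kj using padd 2 by simp
            moreover have "1 \<le> i + j" using 2 by simp
            ultimately show ?thesis unfolding LX0 by blast
          qed
        qed
      qed
    qed
    then show ?thesis using dis3 finS inS by (simp only:) (rule lang_x0, auto)
  qed
  have regL: "regular_on A L" unfolding L_def A_def using XY by (intro lang1) auto
  have AS: "automatic_structure ?C ?m A L"
    unfolding automatic_structure_def
    using finA AC regL Lne surj regeps regX regY unfolding A_def by auto
  have pref: "\<beta> \<in> Pref L \<and> \<beta> \<noteq> [] \<longleftrightarrow> \<beta> \<in> L" for \<beta>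
  proof
    assume "\<beta> \<in> Pref L \<and> \<beta> \<noteq> []"
    then obtain \<gamma> i j where b: "\<beta> @ \<gamma> = replicate i X @ replicate j Y" "\<beta> \<noteq> []"
      unfolding Pref_def L_def by auto
    define n where "n = length \<beta>"
    have "\<beta> = take n (\<beta> @ \<gamma>)" unfolding n_def by simp
    also have "\<dots> = replicate (min n i) X @ replicate (min (n - i) j) Y"
      unfolding b(1) by (simp add: take_append)
    finally have be: "\<beta> = replicate (min n i) X @ replicate (min (n - i) j) Y" .
    then have "1 \<le> min n i + min (n - i) j" using b(2) by (cases "min n i + min (n - i) j") auto
    then show "\<beta> \<in> L" unfolding L_def using be by blast
  next
    assume "\<beta> \<in> L"
    then show "\<beta> \<in> Pref L \<and> \<beta> \<noteq> []" unfolding Pref_def using Lne by (auto intro: exI[of _ "[]"])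
  qed
  have eqP: "{pad \<alpha> \<beta> | \<alpha> \<beta>. \<alpha> \<in> L \<and> \<beta> \<in> Pref L \<and> \<beta> \<noteq> [] \<and> sg_eval ?m \<alpha> = sg_eval ?m \<beta>} = L_dollar ?m L []"
  proof -
    have pref2: "(\<beta> \<in> Pref L \<and> \<beta> \<noteq> [] \<and> P) = (\<beta> \<in> L \<and> P)" for \<beta> P using pref by blast
    show ?thesis unfolding L_dollar_def by (simp only: pref2 append_Nil2)
  qed
  show ?thesis unfolding prefix_automatic_sg_def
  proof (intro exI[of _ A] exI[of _ L] conjI)
    show "automatic_structure ?C ?m A L" by (rule AS)
    show "regular_on (alphabet2 A) {pad \<alpha> \<beta> | \<alpha> \<beta>. \<alpha> \<in> L \<and> \<beta> \<in> Pref L \<and> \<beta> \<noteq> [] \<and> sg_eval ?m \<alpha> = sg_eval ?m \<beta>}"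
      unfolding eqP by (rule regeps)
  qed
qed


theorem theorem3p1p9:
  fixes k :: nat
  shows "prefix_automatic_sg (S_carrier k) (S_mult k) \<longleftrightarrow> k \<le> 1"
proof
  assume P: "prefix_automatic_sg (S_carrier k) (S_mult k)"
  show "k \<le> 1"
  proof (rule ccontr)
    assume "\<not> k \<le> 1"
    then have k2: "2 \<le> k" by simp
    from P obtain A L where "automatic_structure (S_carrier k) (S_mult k) A L"
      unfolding prefix_automatic_sg_def by blast
    then show False using not_automatic[OF k2] by blast
  qed
next
  assume "k \<le> 1"
  then show "prefix_automatic_sg (S_carrier k) (S_mult k)" by (rule prefix_automatic_le1)
qed

end
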